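(* Consider the sparse federated learning setting and the FedGradMP algorithm described in the context, under the standing assumptions stated there. Fix a round $t$, a client $i$ and a local step $k$, and let $\widehat{\Gamma}$ be the index set obtained at the $k$-th local iteration at client $i$ (so $\widehat\Gamma=\Gamma\cup\Lambda$ with $\Gamma=\mathrm{approx}_{2\tau}(\nabla g_{i,j_k}(x^{(i)}_{t,k}),\eta_1)$, and $b^{(i)}_{t,k}$ is the minimizer of $f_i$ over $\mathcal{R}(\mathcal{A}_{\widehat\Gamma})$). Then, for any $\theta>0$, \[ \mathbb{E}^{(i)}_{j_k}\,\|P^\perp_{\widehat{\Gamma}}( b^{(i)}_{t,k} - x^* )\|_2^2 \le \beta_2(i)\, \| x^{(i)}_{t,k} - x^* \|_2^2 + \xi_2(i), \] where \[ \beta_2(i) = 2\,\frac{\left( \bar{\rho}^{+(i)}_{4\tau} + \frac{1}{\theta^2} \right) - \eta_1^2 \rho^-_{4\tau}(i)}{\eta_1^2 \rho_{4\tau}^{-}(i)} + \frac{2\sqrt{\eta_1^2-1}}{\eta_1 \rho_{4\tau}^{-}(i)}\left(3\, \mathbb{E}_{j_k} (\rho^{+}_\tau(i,j_k))^2+1\right), \] and \[ \xi_2(i)=\frac{8}{(\rho_{4\tau}^{-}(i))^2} \max_{\Omega \subset [d],\,|\Omega| = 4\tau} \| P_{\Omega} \nabla f_i(x^* ) \|_2^2 + \frac{1}{\rho_{4\tau}^{-}(i)} \left[\left(2\theta^2 + \frac{6\sqrt{\eta_1^2-1}}{\eta_1} \right) \sigma_i^2 + \frac{6\sqrt{\eta_1^2-1}}{\eta_1}\|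 \nabla f_i (x^* ) \|_2^2 \right] \] if $\eta_1>1$, and \[ \xi_2(i)=\frac{8}{(\rho_{4\tau}^{-}(i))^2} \max_{\Omega \subset [d],\,|\Omega| = 4\tau} \| P_{\Omega} \nabla f_i(x^* ) \|_2^2 + \frac{2\theta^2 \sigma_i^2}{\rho_{4\tau}^{-}(i)} \] if $\eta_1=1$. Here $\mathbb{E}^{(i)}_{j_k}$ denotes expectation over the mini-batch index $j_k$ drawn uniformly at random from $[M]$ at the $k$-th local step of client $i$, and $\mathbb{E}_{j_k}(\rho^+_\tau(i,j_k))^2=\frac1M\sum_{j=1}^M(\rho^+_\tau(i,j))^2$.
   Context: Dictionary sparsity: let $\mathcal{A}=\{a_1,\dots,a_d\}\subset\mathbb{R}^n$ be a finite set of atoms. A vector $x$ is $s$-sparse with respect to $\mathcal{A}$ if $x=\sum_{l=1}^d\alpha_l a_l$ with at most $s$ nonzero $\alpha_l$; $\|x\|_{0,\mathcal{A}}=\min\{|T|: x=\sum_{l\in T}\alpha_l a_l,\ T\subseteq[d]\}$. For $\Gamma\subseteq[d]$, $\mathcal{R}(\mathcal{A}_\Gamma)$ is the span of $\{a_l:l\in\Gamma\}$, $P_\Gamma$ the orthogonal projection onto it and $P_\Gamma^\perp=I-P_\Gamma$. $\mathcal{H}_s(w)$ denotes a best $s$-sparse approximation of $w$ w.r.t. $\mathcal{A}$, i.e. a minimizer of $\|w-x\|_2$ over $s$-sparse $x$. For $\eta\ge 1$, $\mathrm{approx}_s(w,\eta)$ is an index set $\Gamma\subseteq[d]$ with $|\Gamma|\le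 s$ such that $\|P_\Gamma w-w\|_2\le\eta\|w-\mathcal{H}_s(w)\|_2$ ($\eta=1$ means exact projection). Problem: there are $N$ clients with weights $p_i\in[0,1]$, $\sum_i p_i=1$; $f(x)=\sum_{i=1}^N p_if_i(x)$ with $f_i(x)=\frac1M\sum_{j=1}^M g_{i,j}(x)$ ($g_{i,j}$ differentiable: loss of client $i$ on mini-batch $j$). $x^*$ is a minimizer of $f$ subject to $\|x\|_{0,\mathcal{A}}\le\tau$. Standing assumptions (for $s\in\{\tau,4\tau\}$): ($\mathcal{A}$-RSC) for each $i$ and all $x_1,x_2$ with $\|x_1-x_2\|_{0,\mathcal{A}}\le s$: $f_i(x_1)-f_i(x_2)-\langle\nabla f_i(x_2),x_1-x_2\rangle\ge\frac{\rho^-_s(i)}{2}\|x_1-x_2\|_2^2$. ($\mathcal{A}$-RSS) for each $i,j$ and all $x_1,x_2$ with $\|x_1-x_2\|_{0,\mathcal{A}}\le s$: $\|\nabla g_{i,j}(x_1)-\nabla g_{i,j}(x_2)\|_2\le\rho^+_s(i,j)\|x_1-x_2\|_2$; set $\bar\rho^{+(i)}_s=\frac1M\sum_{j=1}^M\rho^+_s(i,j)$. (Stochastic gradients) with $j$ uniform on $[M]$, for every $\tau$-sparse $x$: $\mathbb{E}_j\nabla g_{i,j}(x)=\nabla f_i(x)$ and $\mathbb{E}_j\|\nabla g_{i,j}(x)-\nabla f_i(x)\|_2^2\le\sigma_i^2$. FedGradMP algorithm (parameters: rounds $T$, local iterations $K$, sparsity $\tau$, $\eta_1,\eta_2,\eta_3\ge1$;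 initial point $x_0$, index set $\Lambda=\emptyset$ initially): for each round $t$ and each client $i$: set $x^{(i)}_{t,1}=x_t$; for $k=1,\dots,K$: draw $j_k$ uniformly at random from $[M]$ (independently of everything else); compute $r=\nabla g_{i,j_k}(x^{(i)}_{t,k})$; $\Gamma=\mathrm{approx}_{2\tau}(r,\eta_1)$; $\widehat\Gamma=\Gamma\cup\Lambda$; $b^{(i)}_{t,k}=\arg\min\{f_i(x):x\in\mathcal{R}(\mathcal{A}_{\widehat\Gamma})\}$; $\Lambda=\mathrm{approx}_\tau(b^{(i)}_{t,k},\eta_2)$; $x^{(i)}_{t,k+1}=P_\Lambda(b^{(i)}_{t,k})$. Then the server sets $\Lambda_s=\mathrm{approx}_\tau(\sum_ip_ix^{(i)}_{t,K+1},\eta_3)$ and $x_{t+1}=P_{\Lambda_s}(\sum_ip_ix^{(i)}_{t,K+1})$. *)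

theory Defs
  imports "HOL-Analysis.Analysis"
begin

text \<open>Atoms are A 0, ..., A (d-1) (i.e. the index set [d] is rendered as {..<d}).\<close>

definition sparse_wrt :: "(nat \<Rightarrow> 'a::euclidean_space) \<Rightarrow> nat \<Rightarrow> nat \<Rightarrow> 'a \<Rightarrow> bool" where
  "sparse_wrt A d s x \<longleftrightarrow>
     (\<exists>T \<alpha>. T \<subseteq> {..<d} \<and> card T \<le> s \<and> x = (\<Sum>l\<in>T. \<alpha> l *\<^sub>R A l))"

definition proj :: "(nat \<Rightarrow> 'a::euclidean_space) \<Rightarrow> nat set \<Rightarrow> 'a \<Rightarrow> 'a" where
  "proj A \<Gamma> w = closest_point (span (A ` \<Gamma>)) w"

definition proj_perp :: "(nat \<Rightarrow> 'a::euclidean_space) \<Rightarrow> nat set \<Rightarrow> 'a \<Rightarrow> 'a" where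
  "proj_perp A \<Gamma> w = w - proj A \<Gamma> w"

definition best_sparse_approx :: "(nat \<Rightarrow> 'a::euclidean_space) \<Rightarrow> nat \<Rightarrow> nat \<Rightarrow> 'a \<Rightarrow> 'a \<Rightarrow> bool" where
  "best_sparse_approx A d s w h \<longleftrightarrow>
     sparse_wrt A d s h \<and> (\<forall>x. sparse_wrt A d s x \<longrightarrow> norm (w - h) \<le> norm (w - x))"

text \<open>Gamma is a valid output of approx_s(w, eta).\<close>
definition is_approx :: "(nat \<Rightarrow> 'a::euclidean_space) \<Rightarrow> nat \<Rightarrow> nat \<Rightarrow> 'a \<Rightarrow> real \<Rightarrow> nat set \<Rightarrow> bool" where
  "is_approx A d s w \<eta> \<Gamma> \<longleftrightarrow>
     \<Gamma> \<subseteq> {..<d} \<and> card \<Gamma> \<le> s \<and>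
     (\<exists>h. best_sparse_approx A d s w h \<and> norm (proj A \<Gamma> w - w) \<le> \<eta> * norm (w - h))"

definition loc_f :: "nat \<Rightarrow> (nat \<Rightarrow> nat \<Rightarrow> 'a \<Rightarrow> real) \<Rightarrow> nat \<Rightarrow> 'a \<Rightarrow> real" where
  "loc_f M g i x = (1 / real M) * (\<Sum>j<M. g i j x)"

definition loc_grad :: "nat \<Rightarrow> (nat \<Rightarrow> nat \<Rightarrow> 'a \<Rightarrow> 'a::real_vector) \<Rightarrow> nat \<Rightarrow> 'a \<Rightarrow> 'a" where
  "loc_grad M G i x = (1 / real M) *\<^sub>R (\<Sum>j<M. G i j x)"

end

theory Submission
  imports Defs
begin

lemma span_cc: "closed (span S)" "convex (span S)" "span S \<noteq> {}"
  for S :: "'a::euclidean_space set"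
  using closed_subspace[OF subspace_span] subspace_imp_convex[OF subspace_span] span_zero
  by auto

lemma proj_in: "proj A \<Gamma> w \<in> span (A ` \<Gamma>)"
  unfolding proj_def using span_cc by (intro closest_point_in_set) auto

lemma proj_le: "u \<in> span (A ` \<Gamma>) \<Longrightarrow> norm (w - proj A \<Gamma> w) \<le> norm (w - u)"
  unfolding proj_def using closest_point_le[OF span_cc(1), of u "A ` \<Gamma>" w]
  by (simp add: dist_norm)

lemma proj_orth: "u \<in> span (A ` \<Gamma>) \<Longrightarrow> inner (w - proj A \<Gamma> w) u = 0"
proof -
  assume u: "u \<in> span (A ` \<Gamma>)"
  let ?P = "proj A \<Gamma> w"
  have P: "?P \<in> span (A ` \<Gamma>)" by (rule proj_in)
  have "inner (w - ?P) ((?P + u) - ?P) \<le> 0"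
    unfolding proj_def using span_add[OF P u] span_cc
    by (intro closest_point_dot) (auto simp: proj_def)
  moreover have "inner (w - ?P) ((?P - u) - ?P) \<le> 0"
    unfolding proj_def using span_diff[OF P u] span_cc
    by (intro closest_point_dot) (auto simp: proj_def)
  ultimately show ?thesis by (simp add: inner_minus_right)
qed

lemma proj_pyth: "(norm w)\<^sup>2 = (norm (proj A \<Gamma> w))\<^sup>2 + (norm (w - proj A \<Gamma> w))\<^sup>2"
proof -
  have "inner (proj A \<Gamma> w) (w - proj A \<Gamma> w) = 0"
    using proj_orth[OF proj_in] by (simp add: inner_commute)
  then have "orthogonal (proj A \<Gamma> w) (w - proj A \<Gamma> w)" unfolding orthogonal_def .
  from norm_add_Pythagorean[OF this] show ?thesis by simp
qed

lemma span_repr: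
  assumes "finite R" "v \<in> span (A ` R)"
  shows "\<exists>\<alpha>. v = (\<Sum>l\<in>R. \<alpha> l *\<^sub>R A l)"
  using assms(2)
proof (induct rule: span_induct_alt)
  case base
  show ?case by (rule exI[of _ "\<lambda>_. 0"]) simp
next
  case (step c x y)
  then obtain l0 where l0: "l0 \<in> R" "x = A l0" by auto
  from step obtain b where b: "y = (\<Sum>l\<in>R. b l *\<^sub>R A l)" by blast
  have "(\<Sum>l\<in>R. (if l = l0 then c else 0) *\<^sub>R A l) = (\<Sum>l\<in>R. if l = l0 then c *\<^sub>R A l else 0)"
    by (rule sum.cong) auto
  also have "\<dots> = c *\<^sub>R A l0" using l0 assms(1) by (simp add: sum.delta)
  finally have "c *\<^sub>R x + y = (\<Sum>l\<in>R. (if l = l0 then c else 0) *\<^sub>R A l) + (\<Sum>l\<in>R. b l *\<^sub>R A l)"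
    using l0 b by simp
  also have "\<dots> = (\<Sum>l\<in>R. ((if l = l0 then c else 0) + b l) *\<^sub>R A l)"
    by (simp add: scaleR_add_left sum.distrib)
  finally show ?case by (rule exI[of _ "\<lambda>l. (if l = l0 then c else 0) + b l"])
qed

lemma sparse_of_span:
  assumes "R \<subseteq> {..<d}" "card R \<le> s" "v \<in> span (A ` R)"
  shows "sparse_wrt A d s v"
proof -
  have "finite R" using assms(1) finite_subset by blast
  then obtain \<alpha> where "v = (\<Sum>l\<in>R. \<alpha> l *\<^sub>R A l)" using span_repr assms(3) by blast
  then show ?thesis unfolding sparse_wrt_def using assms by blast
qed

lemma span_of_sparse:
  assumes "sparse_wrt A d s v"
  shows "\<exists>T. T \<subseteq> {..<d} \<and> card T \<le> s \<and> v \<in> span (A ` T)"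
proof -
  obtain T \<alpha> where T: "T \<subseteq> {..<d}" "card T \<le> s" "v = (\<Sum>l\<in>T. \<alpha> l *\<^sub>R A l)"
    using assms unfolding sparse_wrt_def by blast
  have "v \<in> span (A ` T)" unfolding T(3)
    by (intro span_sum span_scale span_base) auto
  then show ?thesis using T by blast
qed

lemma sparse_mono: "sparse_wrt A d s v \<Longrightarrow> s \<le> s' \<Longrightarrow> sparse_wrt A d s' v"
  unfolding sparse_wrt_def by (blast intro: order_trans)

lemma pad_set:
  assumes "\<Omega> \<subseteq> {..<d}" "card \<Omega> \<le> n" "n \<le> d"
  shows "\<exists>\<Omega>'. \<Omega> \<subseteq> \<Omega>' \<and> \<Omega>' \<subseteq> {..<d} \<and> card \<Omega>' = n"
proof -
  have fin: "finite \<Omega>" using assms(1) finite_subset by blast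
  have "card ({..<d} - \<Omega>) = d - card \<Omega>" using assms(1) fin by (simp add: card_Diff_subset)
  then have "n - card \<Omega> \<le> card ({..<d} - \<Omega>)" using assms by simp
  then obtain B where B: "B \<subseteq> {..<d} - \<Omega>" "card B = n - card \<Omega>" "finite B"
    by (rule obtain_subset_with_card_n)
  have "card (\<Omega> \<union> B) = card \<Omega> + card B" using B fin by (intro card_Un_disjoint) auto
  then have "card (\<Omega> \<union> B) = n" using B assms by simp
  then show ?thesis using B assms by (intro exI[of _ "\<Omega> \<union> B"]) auto
qed

lemma quad_upper:
  fixes \<phi> \<phi>' :: "real \<Rightarrow> real"
  assumes d: "\<And>t. (\<phi> has_real_derivative \<phi>' t) (at t)"
    and L: "\<And>t. 0 \<le> t \<Longrightarrow> t \<le> 1 \<Longrightarrow> \<phi>' t - \<phi>' 0 \<le> L * t"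
  shows "\<phi> 1 \<le> \<phi> 0 + \<phi>' 0 + L / 2"
proof -
  define \<psi> where "\<psi> t = \<phi> t - t * \<phi>' 0 - L * t\<^sup>2 / 2" for t
  have "\<psi> 0 \<ge> \<psi> 1"
  proof (rule DERIV_nonpos_imp_nonincreasing[of 0 1 \<psi>])
    fix t :: real assume t: "0 \<le> t" "t \<le> 1"
    have "(\<psi> has_real_derivative (\<phi>' t - \<phi>' 0 - L * t)) (at t)"
      unfolding \<psi>_def by (auto intro!: derivative_eq_intros d)
    then show "\<exists>y. (\<psi> has_real_derivative y) (at t) \<and> y \<le> 0" using L[OF t] by auto
  qed simp
  then show ?thesis unfolding \<psi>_def by simp
qed

lemma lip_avg:
  fixes G :: "nat \<Rightarrow> nat \<Rightarrow> 'a \<Rightarrow> 'a::real_normed_vector"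
  assumes "M > 0" and "\<forall>j<M. norm (G i j y1 - G i j y2) \<le> r j * t"
  shows "norm (loc_grad M G i y1 - loc_grad M G i y2) \<le> ((1 / real M) * (\<Sum>j<M. r j)) * t"
proof -
  have "loc_grad M G i y1 - loc_grad M G i y2 = (1 / real M) *\<^sub>R (\<Sum>j<M. G i j y1 - G i j y2)"
    unfolding loc_grad_def by (simp add: sum_subtractf scaleR_diff_right)
  then have "norm (loc_grad M G i y1 - loc_grad M G i y2) = (1 / real M) * norm (\<Sum>j<M. G i j y1 - G i j y2)"
    by simp
  also have "\<dots> \<le> (1 / real M) * (\<Sum>j<M. norm (G i j y1 - G i j y2))"
    by (intro mult_left_mono norm_sum) simp
  also have "\<dots> \<le> (1 / real M) * (\<Sum>j<M. r j * t)"
    using assms(2) by (intro mult_left_mono sum_mono) simp_all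
  also have "\<dots> = ((1 / real M) * (\<Sum>j<M. r j)) * t"
    by (simp add: sum_distrib_right)
  finally show ?thesis .
qed

lemma loc_f_deriv:
  assumes "\<forall>j<M. \<forall>y. (g i j has_derivative (\<lambda>h. G i j y \<bullet> h)) (at y)"
  shows "(loc_f M g i has_derivative (\<lambda>h. loc_grad M G i y \<bullet> h)) (at y)"
proof -
  have "((\<lambda>y. \<Sum>j<M. g i j y) has_derivative (\<lambda>h. \<Sum>j<M. G i j y \<bullet> h)) (at y)"
    using assms by (intro has_derivative_sum) auto
  then have "((\<lambda>y. (1 / real M) * (\<Sum>j<M. g i j y)) has_derivative (\<lambda>h. (1 / real M) * (\<Sum>j<M. G i j y \<bullet> h))) (at y)"
    by (rule has_derivative_mult_right)
  moreover have "(\<lambda>h. (1 / real M) * (\<Sum>j<M. G i j y \<bullet> h)) = (\<lambda>h. loc_grad M G i y \<bullet> h)"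
    unfolding loc_grad_def by (simp add: inner_sum_left)
  ultimately show ?thesis unfolding loc_f_def[abs_def] by simp
qed

lemma line_deriv:
  fixes f :: "'a::real_inner \<Rightarrow> real"
  assumes "\<And>y. (f has_derivative (\<lambda>h. F y \<bullet> h)) (at y)"
  shows "((\<lambda>t. f (x + t *\<^sub>R v)) has_real_derivative (F (x + t *\<^sub>R v) \<bullet> v)) (at t)"
proof -
  have "((\<lambda>t. x + t *\<^sub>R v) has_derivative (\<lambda>h. h *\<^sub>R v)) (at t)"
    by (auto intro!: derivative_eq_intros)
  from has_derivative_compose[OF this assms]
  have "((\<lambda>t. f (x + t *\<^sub>R v)) has_derivative (\<lambda>h. F (x + t *\<^sub>R v) \<bullet> (h *\<^sub>R v))) (at t)" .
  moreover have "(\<lambda>h. F (x + t *\<^sub>R v) \<bullet> (h *\<^sub>R v)) = (*) (F (x + t *\<^sub>R v) \<bullet> v)"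
    by (auto simp: inner_scaleR_right)
  ultimately show ?thesis unfolding has_field_derivative_def by simp
qed

lemma qcoef: fixes c0 k rb Q :: real
  assumes "c0 > 0" "k > 0" "rb + 1/k = c0"
  shows "- (1 / c0) * Q + Q / (2 * c0) + Q / (2 * k * c0\<^sup>2) + rb / 2 * ((1 / c0)\<^sup>2 * Q) = 0"
proof -
  have rb: "rb = c0 - 1/k" using assms(3) by simp
  show ?thesis unfolding rb using assms(1,2) by (simp add: field_simps power2_eq_square)
qed

lemma young: fixes a b k :: real assumes "k > 0" shows "2 * a * b \<le> a\<^sup>2 / k + k * b\<^sup>2"
proof -
  have "0 \<le> (a - k * b)\<^sup>2" by simp
  then have "2 * k * a * b \<le> a\<^sup>2 + k\<^sup>2 * b\<^sup>2" by (simp add: power2_eq_square algebra_simps)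
  then have "(2 * k * a * b) / k \<le> (a\<^sup>2 + k\<^sup>2 * b\<^sup>2) / k" using assms
    by (intro divide_right_mono) simp_all
  moreover have "(2 * k * a * b) / k = 2 * a * b" using assms by simp
  moreover have "(a\<^sup>2 + k\<^sup>2 * b\<^sup>2) / k = a\<^sup>2 / k + k * b\<^sup>2" using assms
    by (simp add: add_divide_distrib power2_eq_square)
  ultimately show ?thesis by simp
qed

lemma lin_help: "5/2 * (Eh - Ep) \<le> 3/2 * (X0 + Ep) \<Longrightarrow> 0 \<le> (t::real) \<Longrightarrow> 5/2 * (X0 + Eh + t/2) \<le> 4 * (X0 + Ep + t/2)"
  by (simp add: field_simps)

lemma final_arith:
  fixes \<rho> rb E c \<eta> \<theta> D g ss mm EL Ev :: real
  assumes rho: "\<rho> > 0" and th: "\<theta> > 0" and eta: "\<eta> \<ge> 1" and cdef: "c = sqrt (\<eta>\<^sup>2 - 1) / \<eta>"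
    and D: "D \<ge> 0" and g: "g \<ge> 0" and ss: "ss \<ge> 0" and mm: "mm \<ge> 0"
    and E: "E \<ge> \<rho>\<^sup>2" and rb: "rb \<ge> \<rho>"
    and EL1: "EL \<le> D\<^sup>2" and EL2: "EL \<le> Ev"
    and h1: "\<rho>/4  *  Ev \<le> ((rb + 1/\<theta>\<^sup>2)  *  D\<^sup>2 / (2 * \<eta>\<^sup>2) - \<rho>  *  D\<^sup>2 / 2) + c * D * (g + ss + rb * D) + \<theta>\<^sup>2 * ss\<^sup>2/2 + mm/\<rho>"
    and h2: "2 * \<rho>/5  *  Ev \<le> ((rb + 1/\<theta>\<^sup>2)  *  D\<^sup>2 / (2 * \<eta>\<^sup>2) - \<rho>  *  D\<^sup>2 / 2) + c * D * (g + ss + rb * D) + \<theta>\<^sup>2 * ss\<^sup>2/2 + 5 * mm/(2 * \<rho>)"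
  shows "EL \<le> (2 * ((rb + 1/\<theta>\<^sup>2) - \<eta>\<^sup>2 * \<rho>)/(\<eta>\<^sup>2 * \<rho>) + 2 * sqrt(\<eta>\<^sup>2-1)/(\<eta> * \<rho>) * (3 * E+1)) * D\<^sup>2
            + (8/\<rho>\<^sup>2 * mm + 1/\<rho> * ((2 * \<theta>\<^sup>2 + 6 * c) * ss\<^sup>2 + 6 * c * g\<^sup>2))"
proof -
  define X0 where "X0 = (rb + 1/\<theta>\<^sup>2)  *  D\<^sup>2 / (2 * \<eta>\<^sup>2) - \<rho>  *  D\<^sup>2 / 2"
  define Eh where "Eh = c * D * (g + ss + rb * D)"
  define Ep where "Ep = c/2 * ((3 * E+1) * D\<^sup>2 + 3 * ss\<^sup>2 + 3 * g\<^sup>2)"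
  define T where "T = 4/\<rho> * (X0 + Ep + \<theta>\<^sup>2 * ss\<^sup>2/2) + 8 * mm/\<rho>\<^sup>2"
  have etapos: "\<eta> > 0" using eta by simp
  have c0: "c \<ge> 0" unfolding cdef using eta by (intro divide_nonneg_nonneg) auto
  have e21: "\<eta>\<^sup>2 \<ge> 1" using eta by (simp add: one_le_power)
  have "(sqrt (\<eta>\<^sup>2 - 1))\<^sup>2 = \<eta>\<^sup>2 - 1" using e21 by simp
  then have csq: "c\<^sup>2 = 1 - 1/\<eta>\<^sup>2"
    unfolding cdef using etapos by (simp add: power_divide field_simps)
  have c1: "c\<^sup>2 \<le> 1" using csq etapos by simp
  have cle1: "c \<le> 1" using c1 c0 by (metis abs_of_nonneg abs_square_le_1)
  have T_eq: "(2 * ((rb + 1/\<theta>\<^sup>2) - \<eta>\<^sup>2 * \<rho>)/(\<eta>\<^sup>2 * \<rho>) + 2 * sqrt(\<eta>\<^sup>2-1)/(\<eta> * \<rho>) * (3 * E+1)) * D\<^sup>2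
            + (8/\<rho>\<^sup>2 * mm + 1/\<rho> * ((2 * \<theta>\<^sup>2 + 6 * c) * ss\<^sup>2 + 6 * c * g\<^sup>2)) = T"
    unfolding T_def X0_def Ep_def using rho etapos
    by (simp add: cdef field_simps power2_eq_square)
  have X0low: "X0 \<ge> (rb * (1-c\<^sup>2) - \<rho>) * D\<^sup>2/2"
  proof -
    have "rb * (1-c\<^sup>2) \<le> (rb + 1/\<theta>\<^sup>2) / \<eta>\<^sup>2"
      using csq etapos by (simp add: divide_right_mono)
    then have i1: "rb * (1-c\<^sup>2) * D\<^sup>2 \<le> (rb + 1/\<theta>\<^sup>2) / \<eta>\<^sup>2 * D\<^sup>2"
      by (rule mult_right_mono) simp
    have "(rb * (1-c\<^sup>2) - \<rho>) * D\<^sup>2/2 = rb * (1-c\<^sup>2) * D\<^sup>2 / 2 - \<rho> * D\<^sup>2/2"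
      by (simp add: field_simps)
    also have "\<dots> \<le> (rb + 1/\<theta>\<^sup>2) / \<eta>\<^sup>2 * D\<^sup>2 / 2 - \<rho> * D\<^sup>2/2"
      using i1 by simp
    also have "\<dots> = X0" unfolding X0_def by simp
    finally show ?thesis .
  qed
  have Eplow: "Ep \<ge> c/2 * (3 * E+1) * D\<^sup>2" unfolding Ep_def using c0
    by (simp add: mult_left_mono algebra_simps)
  define Y where "Y = 2 * rb * (1-c\<^sup>2) - 2 * \<rho> + 2 * c * (3 * E+1)"
  have XEp: "X0 + Ep \<ge> D\<^sup>2  *  Y / 4" using X0low Eplow unfolding Y_def
    by (simp add: algebra_simps)
  have gD: "D * g \<le> 3/2 * g\<^sup>2 + D\<^sup>2/6"
    using sum_squares_ge_zero[of "3 * g - D" 0] by (simp add: power2_eq_square algebra_simps)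
  have sD: "D * ss \<le> 3/2 * ss\<^sup>2 + D\<^sup>2/6"
    using sum_squares_ge_zero[of "3 * ss - D" 0] by (simp add: power2_eq_square algebra_simps)
  have EhEp: "Eh - Ep \<le> c * (rb - 3/2 * E - 1/6) * D\<^sup>2"
  proof -
    have "D * (g + ss + rb * D) - 1/2 * ((3 * E+1) * D\<^sup>2 + 3 * ss\<^sup>2 + 3 * g\<^sup>2) \<le> (rb - 3/2 * E - 1/6) * D\<^sup>2"
      using gD sD by (simp add: power2_eq_square algebra_simps)
    then have "c * (D * (g + ss + rb * D) - 1/2 * ((3 * E+1) * D\<^sup>2 + 3 * ss\<^sup>2 + 3 * g\<^sup>2)) \<le> c * ((rb - 3/2 * E - 1/6) * D\<^sup>2)"
      using c0 by (rule mult_left_mono)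
    then show ?thesis unfolding Eh_def Ep_def by (simp add: algebra_simps)
  qed
  have "EL \<le> T"
  proof (cases "rb \<le> 3/2 * E + 1/6")
    case True
    have "c * (rb - 3/2 * E - 1/6) * D\<^sup>2 \<le> 0"
      using True c0 by (simp add: mult_nonneg_nonpos mult_nonpos_nonneg)
    then have "Eh \<le> Ep" using EhEp by simp
    have "Ev \<le> 4/\<rho> * (X0 + Eh + \<theta>\<^sup>2 * ss\<^sup>2/2 + mm/\<rho>)"
      using h1 rho unfolding X0_def Eh_def by (simp add: field_simps)
    also have "\<dots> \<le> T"
    proof -
      have "4/\<rho> * (X0 + Eh + \<theta>\<^sup>2 * ss\<^sup>2/2) \<le> 4/\<rho> * (X0 + Ep + \<theta>\<^sup>2 * ss\<^sup>2/2)"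
        using \<open>Eh \<le> Ep\<close> rho by (intro mult_left_mono) simp_all
      moreover have "4/\<rho> * (mm/\<rho>) \<le> 8 * mm/\<rho>\<^sup>2"
        using rho mm by (simp add: field_simps power2_eq_square)
      ultimately show ?thesis unfolding T_def by (simp add: distrib_left)
    qed
    finally show ?thesis using EL2 by simp
  next
    case False
    show ?thesis
    proof (cases "Y \<ge> \<rho>")
      case True
      have "D\<^sup>2  *  \<rho> \<le> D\<^sup>2  *  Y" using True by (simp add: mult_left_mono)
      then have "D\<^sup>2 \<le> 4/\<rho> * (X0 + Ep)" using XEp rho by (simp add: field_simps)
      also have "\<dots> \<le> T" unfolding T_def using rho mm th
        by (simp add: field_simps)
      finally show ?thesis using EL1 by simp
    next
      case Ylt: False
      have E1: "3 * E + 1 \<ge> 17/5 * \<rho>"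
        using E sum_squares_ge_zero[of "\<rho> - 17/30" 0] by (simp add: power2_eq_square algebra_simps)
      have E2: "6 * E + 7/6 \<ge> 26/5 * \<rho>"
        using E sum_squares_ge_zero[of "\<rho> - 13/30" 0] by (simp add: power2_eq_square algebra_simps)
      have "Y \<ge> -2 * \<rho> * c\<^sup>2 + 2 * c * (3 * E+1)"
      proof -
        have "rb * (1-c\<^sup>2) \<ge> \<rho> * (1-c\<^sup>2)" using rb c1 by (simp add: mult_right_mono)
        then show ?thesis unfolding Y_def by (simp add: algebra_simps)
      qed
      moreover have "c * (3 * E+1) \<ge> c * (17/5 * \<rho>)" using E1 c0 by (rule mult_left_mono)
      moreover have "\<rho> * c\<^sup>2 \<le> \<rho> * c" using c0 cle1 rho
        by (simp add: power2_eq_square mult_left_le)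
      ultimately have "Y \<ge> 24/5 * c * \<rho>" by (simp add: algebra_simps)
      then have "24/5 * c * \<rho> < \<rho>" using Ylt by simp
      then have csmall: "c < 5/24" using rho by simp
      have "2 * rb * (1-c\<^sup>2) - 2 * \<rho> < \<rho>"
      proof -
        have "E \<ge> 0" using E by (metis zero_le_power2 order_trans)
        then have "2 * c * (3 * E+1) \<ge> 0" using c0 by simp
        then show ?thesis using Ylt unfolding Y_def by simp
      qed
      then have rb1: "rb * (1-c\<^sup>2) < 3/2 * \<rho>" by simp
      have c2s: "c\<^sup>2 \<le> (5/24)\<^sup>2" using csmall c0 by (intro power_mono) simp_all
      have "rb * (1 - 25/576) \<le> rb * (1-c\<^sup>2)"
        using c2s rb rho by (intro mult_left_mono) (simp_all add: power2_eq_square)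
      then have rb2: "551/576 * rb \<le> rb * (1-c\<^sup>2)" by simp
      have rbs: "rb \<le> 157/100 * \<rho>" using rb1 rb2 rho by linarith
      have key0: "(5/2) * rb + (3/4) * rb * c \<le> 6 * E + 7/6"
      proof -
        have "rb * c \<le> rb * (5/24)" using csmall rb rho by (intro mult_left_mono) simp_all
        then show ?thesis using rbs E2 rho by simp
      qed
      have "(5/2) * rb + (3/4) * rb * c - 6 * E - 7/6 \<le> 0" using key0 by linarith
      from mult_nonneg_nonpos[OF c0 this]
      have "c * ((5/2) * rb + (3/4) * rb * c - 6 * E - 7/6) \<le> 0" .
      then have key1: "(5/2) * c * (rb - 3/2 * E - 1/6) \<le> (3/8) * Y"
        unfolding Y_def using rb by (simp add: algebra_simps power2_eq_square)
      have "(5/2) * (Eh - Ep) \<le> (5/2) * (c * (rb - 3/2 * E - 1/6) * D\<^sup>2)" using EhEp by simp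
      also have "\<dots> = ((5/2) * c * (rb - 3/2 * E - 1/6)) * D\<^sup>2" by simp
      also have "\<dots> \<le> ((3/8) * Y) * D\<^sup>2" using key1 by (rule mult_right_mono) simp
      also have "\<dots> \<le> (3/2) * (X0 + Ep)" using XEp by (simp add: mult.commute)
      finally have k2: "(5/2) * (Eh - Ep) \<le> (3/2) * (X0 + Ep)" .
      have "Ev \<le> 5/(2 * \<rho>) * (X0 + Eh + \<theta>\<^sup>2 * ss\<^sup>2/2 + 5 * mm/(2 * \<rho>))"
        using h2 rho unfolding X0_def Eh_def by (simp add: field_simps)
      also have "\<dots> \<le> T"
      proof -
        have "5/2 * (X0 + Eh + \<theta>\<^sup>2 * ss\<^sup>2/2) \<le> 4 * (X0 + Ep + \<theta>\<^sup>2 * ss\<^sup>2/2)"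
        proof -
          have tz: "\<theta>\<^sup>2 * ss\<^sup>2 \<ge> 0" by simp
          show ?thesis using lin_help[OF k2 tz] .
        qed
        then have "(5/2 * (X0 + Eh + \<theta>\<^sup>2 * ss\<^sup>2/2)) / \<rho> \<le> (4 * (X0 + Ep + \<theta>\<^sup>2 * ss\<^sup>2/2)) / \<rho>"
          using rho by (intro divide_right_mono) simp_all
        then have "5/(2 * \<rho>) * (X0 + Eh + \<theta>\<^sup>2 * ss\<^sup>2/2) \<le> 4/\<rho> * (X0 + Ep + \<theta>\<^sup>2 * ss\<^sup>2/2)"
          by simp
        moreover have "5/(2 * \<rho>) * (5 * mm/(2 * \<rho>)) \<le> 8 * mm/\<rho>\<^sup>2"
          using rho mm by (simp add: field_simps power2_eq_square)
        ultimately show ?thesis unfolding T_def by (simp add: distrib_left)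
      qed
      finally show ?thesis using EL2 by simp
    qed
  qed
  then show ?thesis using T_eq by simp
qed

theorem lemma4:
  fixes A :: "nat \<Rightarrow> 'a::euclidean_space" and d N M \<tau> i :: nat
    and p :: "nat \<Rightarrow> real"
    and g :: "nat \<Rightarrow> nat \<Rightarrow> 'a \<Rightarrow> real" and G :: "nat \<Rightarrow> nat \<Rightarrow> 'a \<Rightarrow> 'a"
    and rho_m :: "nat \<Rightarrow> nat \<Rightarrow> real" and rho_p :: "nat \<Rightarrow> nat \<Rightarrow> nat \<Rightarrow> real"
    and \<sigma> :: "nat \<Rightarrow> real" and \<eta>\<^sub>1 \<theta> :: real
    and xstar x :: 'a and \<Lambda> :: "nat set"
    and \<Gamma> :: "nat \<Rightarrow> nat set" and b :: "nat \<Rightarrow> 'a"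
  assumes p_range: "\<forall>l<N. 0 \<le> p l \<and> p l \<le> 1"
    and p_sum: "(\<Sum>l<N. p l) = 1"
    and M_pos: "0 < M"
    and d_ge: "4 * \<tau> \<le> d"
    and grad: "\<forall>l<N. \<forall>j<M. \<forall>y. (g l j has_derivative (\<lambda>h. G l j y \<bullet> h)) (at y)"
    and RSC: "\<forall>s\<in>{\<tau>, 4 * \<tau>}. \<forall>l<N. \<forall>x1 x2. sparse_wrt A d s (x1 - x2) \<longrightarrow>
               loc_f M g l x1 - loc_f M g l x2 - loc_grad M G l x2 \<bullet> (x1 - x2)
                 \<ge> rho_m s l / 2 * (norm (x1 - x2))\<^sup>2"
    and RSC_pos: "\<forall>s\<in>{\<tau>, 4 * \<tau>}. \<forall>l<N. 0 < rho_m s l"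
    and RSS: "\<forall>s\<in>{\<tau>, 4 * \<tau>}. \<forall>l<N. \<forall>j<M. \<forall>x1 x2. sparse_wrt A d s (x1 - x2) \<longrightarrow>
               norm (G l j x1 - G l j x2) \<le> rho_p s l j * norm (x1 - x2)"
    and variance: "\<forall>l<N. \<forall>y. sparse_wrt A d \<tau> y \<longrightarrow>
               (1 / real M) * (\<Sum>j<M. (norm (G l j y - loc_grad M G l y))\<^sup>2) \<le> (\<sigma> l)\<^sup>2"
    and xstar_sparse: "sparse_wrt A d \<tau> xstar"
    and xstar_min: "\<forall>y. sparse_wrt A d \<tau> y \<longrightarrow>
               (\<Sum>l<N. p l * loc_f M g l xstar) \<le> (\<Sum>l<N. p l * loc_f M g l y)"
    and eta1: "1 \<le> \<eta>\<^sub>1"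
    and theta: "0 < \<theta>"
    and client: "i < N"
    and Lambda: "\<Lambda> \<subseteq> {..<d}" "card \<Lambda> \<le> \<tau>" "x \<in> span (A ` \<Lambda>)"
    and Gamma: "\<forall>j<M. is_approx A d (2 * \<tau>) (G i j x) \<eta>\<^sub>1 (\<Gamma> j)"
    and b_min: "\<forall>j<M. b j \<in> span (A ` (\<Gamma> j \<union> \<Lambda>)) \<and>
               (\<forall>y\<in>span (A ` (\<Gamma> j \<union> \<Lambda>)). loc_f M g i (b j) \<le> loc_f M g i y)"
  shows "(let rm = rho_m (4 * \<tau>) i;
              rbar = (1 / real M) * (\<Sum>j<M. rho_p (4 * \<tau>) i j);
              Erho2 = (1 / real M) * (\<Sum>j<M. (rho_p \<tau> i j)\<^sup>2);
              gstar = loc_grad M G i xstar;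
              mx = Max {(norm (proj A \<Omega> gstar))\<^sup>2 | \<Omega>. \<Omega> \<subseteq> {..<d} \<and> card \<Omega> = 4 * \<tau>};
              c = sqrt (\<eta>\<^sub>1\<^sup>2 - 1) / \<eta>\<^sub>1;
              \<beta>\<^sub>2 = 2 * ((rbar + 1 / \<theta>\<^sup>2) - \<eta>\<^sub>1\<^sup>2 * rm) / (\<eta>\<^sub>1\<^sup>2 * rm)
                   + 2 * sqrt (\<eta>\<^sub>1\<^sup>2 - 1) / (\<eta>\<^sub>1 * rm) * (3 * Erho2 + 1);
              \<xi>\<^sub>2 = (if \<eta>\<^sub>1 > 1
                    then 8 / rm\<^sup>2 * mx
                         + 1 / rm * ((2 * \<theta>\<^sup>2 + 6 * c) * (\<sigma> i)\<^sup>2 + 6 * c * (norm gstar)\<^sup>2)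
                    else 8 / rm\<^sup>2 * mx + 2 * \<theta>\<^sup>2 * (\<sigma> i)\<^sup>2 / rm)
          in (1 / real M) * (\<Sum>j<M. (norm (proj_perp A (\<Gamma> j \<union> \<Lambda>) (b j - xstar)))\<^sup>2)
             \<le> \<beta>\<^sub>2 * (norm (x - xstar))\<^sup>2 + \<xi>\<^sub>2)"
proof -
  define f where "f = loc_f M g i"
  define F where "F = loc_grad M G i"
  define \<rho> where "\<rho> = rho_m (4 * \<tau>) i"
  define rb where "rb = (1 / real M) * (\<Sum>j<M. rho_p (4 * \<tau>) i j)"
  define rt where "rt = (1 / real M) * (\<Sum>j<M. rho_p \<tau> i j)"
  define Er where "Er = (1 / real M) * (\<Sum>j<M. (rho_p \<tau> i j)\<^sup>2)"
  define gs where "gs = loc_grad M G i xstar"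
  define mx where "mx = Max {(norm (proj A \<Omega> gs))\<^sup>2 | \<Omega>. \<Omega> \<subseteq> {..<d} \<and> card \<Omega> = 4 * \<tau>}"
  define c where "c = sqrt (\<eta>\<^sub>1\<^sup>2 - 1) / \<eta>\<^sub>1"
  define D where "D = norm (x - xstar)"
  define Dl where "Dl = xstar - x"
  define sg where "sg = \<bar>\<sigma> i\<bar>"
  define gn where "gn = norm gs"
  define EL where "EL = (1 / real M) * (\<Sum>j<M. (norm (proj_perp A (\<Gamma> j \<union> \<Lambda>) (b j - xstar)))\<^sup>2)"

  have rho: "\<rho> > 0" using RSC_pos client unfolding \<rho>_def by auto
  have Mpos: "real M > 0" using M_pos by simp
  have etapos: "\<eta>\<^sub>1 > 0" using eta1 by simp
  have c0: "c \<ge> 0" unfolding c_def using eta1 by (intro divide_nonneg_nonneg) auto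
  have sg2: "sg\<^sup>2 = (\<sigma> i)\<^sup>2" unfolding sg_def by simp
  have DDl: "norm Dl = D" unfolding D_def Dl_def by (simp add: norm_minus_commute)

  define Sset where "Sset = {\<Omega>. \<Omega> \<subseteq> {..<d} \<and> card \<Omega> = 4 * \<tau>}"
  have mxset: "{(norm (proj A \<Omega> gs))\<^sup>2 | \<Omega>. \<Omega> \<subseteq> {..<d} \<and> card \<Omega> = 4 * \<tau>} = (\<lambda>\<Omega>. (norm (proj A \<Omega> gs))\<^sup>2) ` Sset"
    unfolding Sset_def by auto
  have finS: "finite Sset" unfolding Sset_def
    by (rule finite_subset[of _ "Pow {..<d}"]) auto
  have mx_ge: "(norm (proj A \<Omega> gs))\<^sup>2 \<le> mx" if "\<Omega> \<subseteq> {..<d}" "card \<Omega> = 4 * \<tau>" for \<Omega>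
    unfolding mx_def mxset using finS that unfolding Sset_def by (intro Max_ge) auto
  obtain \<Omega>0 where \<Omega>0: "\<Omega>0 \<subseteq> {..<d}" "card \<Omega>0 = 4 * \<tau>" using pad_set[of "{}" d "4 * \<tau>"] d_ge by auto
  have mx0: "mx \<ge> 0" using mx_ge[OF \<Omega>0] by (meson order_trans zero_le_power2)

  have xi: "8 / \<rho>\<^sup>2 * mx + 1 / \<rho> * ((2 * \<theta>\<^sup>2 + 6 * c) * sg\<^sup>2 + 6 * c * gn\<^sup>2)
      = (if \<eta>\<^sub>1 > 1 then 8 / \<rho>\<^sup>2 * mx + 1 / \<rho> * ((2 * \<theta>\<^sup>2 + 6 * c) * (\<sigma> i)\<^sup>2 + 6 * c * (norm gs)\<^sup>2)
         else 8 / \<rho>\<^sup>2 * mx + 2 * \<theta>\<^sup>2 * (\<sigma> i)\<^sup>2 / \<rho>)"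
  proof (cases "\<eta>\<^sub>1 > 1")
    case True then show ?thesis using sg2 unfolding gn_def by simp
  next
    case False
    then have "\<eta>\<^sub>1 = 1" using eta1 by simp
    then have "c = 0" unfolding c_def by simp
    then show ?thesis using False sg2 by simp
  qed

  obtain T \<alpha> where T: "T \<subseteq> {..<d}" "card T \<le> \<tau>" "xstar = (\<Sum>l\<in>T. \<alpha> l *\<^sub>R A l)"
    using xstar_sparse unfolding sparse_wrt_def by blast
  define R where "R = \<Lambda> \<union> T"
  have Rd: "R \<subseteq> {..<d}" unfolding R_def using T Lambda by auto
  have finR: "finite R" using Rd finite_subset by blast
  have finL: "finite \<Lambda>" using Lambda(1) finite_subset by blast
  have finT: "finite T" using T(1) finite_subset by blast
  have cardR: "card R \<le> 2 * \<tau>" unfolding R_def using card_Un_le[of \<Lambda> T] Lambda T by simp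
  have xs_span: "xstar \<in> span (A ` T)" unfolding T(3) by (intro span_sum span_scale span_base) auto
  have x_spanR: "x \<in> span (A ` R)" using Lambda(3) span_mono[of "A ` \<Lambda>" "A ` R"] unfolding R_def by auto
  have xs_spanR: "xstar \<in> span (A ` R)" using xs_span span_mono[of "A ` T" "A ` R"] unfolding R_def by auto
  have Dl_span: "Dl \<in> span (A ` R)" unfolding Dl_def by (rule span_diff[OF xs_spanR x_spanR])
  have x_sp: "sparse_wrt A d \<tau> x" using sparse_of_span[OF Lambda(1,2,3)] .

  have Fder: "\<And>y. (f has_derivative (\<lambda>h. F y \<bullet> h)) (at y)"
    unfolding f_def F_def using grad client by (intro loc_f_deriv) auto
  have RSC4: "\<And>x1 x2. sparse_wrt A d (4 * \<tau>) (x1 - x2) \<Longrightarrow> f x1 - f x2 - F x2 \<bullet> (x1 - x2) \<ge> \<rho> / 2 * (norm (x1 - x2))\<^sup>2"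
    using RSC client unfolding f_def F_def \<rho>_def by auto
  have Lip4: "\<And>y1 y2. sparse_wrt A d (4 * \<tau>) (y1 - y2) \<Longrightarrow> norm (F y1 - F y2) \<le> rb * norm (y1 - y2)"
    unfolding F_def rb_def using RSS client M_pos by (intro lip_avg) auto
  have Lip1: "\<And>y1 y2. sparse_wrt A d \<tau> (y1 - y2) \<Longrightarrow> norm (F y1 - F y2) \<le> rt * norm (y1 - y2)"
    unfolding F_def rt_def using RSS client M_pos by (intro lip_avg) auto

  have fup: "f (x + v) \<le> f x + F x \<bullet> v + rb / 2 * (norm v)\<^sup>2" if sv: "\<And>t. sparse_wrt A d (4 * \<tau>) (t *\<^sub>R v)" for v
  proof -
    have "(\<lambda>t. f (x + t *\<^sub>R v)) 1 \<le> (\<lambda>t. f (x + t *\<^sub>R v)) 0 + F (x + 0 *\<^sub>R v) \<bullet> v + (rb * (norm v)\<^sup>2) / 2"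
    proof (rule quad_upper[where \<phi>' = "\<lambda>t. F (x + t *\<^sub>R v) \<bullet> v"])
      fix t :: real show "((\<lambda>t. f (x + t *\<^sub>R v)) has_real_derivative F (x + t *\<^sub>R v) \<bullet> v) (at t)"
        by (rule line_deriv[OF Fder])
    next
      fix t :: real assume t: "0 \<le> t" "t \<le> 1"
      have "F (x + t *\<^sub>R v) \<bullet> v - F (x + 0 *\<^sub>R v) \<bullet> v = (F (x + t *\<^sub>R v) - F x) \<bullet> v"
        by (simp add: inner_diff_left)
      also have "\<dots> \<le> norm (F (x + t *\<^sub>R v) - F x) * norm v" by (rule norm_cauchy_schwarz)
      also have "\<dots> \<le> (rb * norm (t *\<^sub>R v)) * norm v"
        using Lip4[of "x + t *\<^sub>R v" x] sv[of t] by (intro mult_right_mono) auto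
      also have "\<dots> = rb * (norm v)\<^sup>2 * t" using t by (simp add: power2_eq_square)
      finally show "F (x + t *\<^sub>R v) \<bullet> v - F (x + 0 *\<^sub>R v) \<bullet> v \<le> rb * (norm v)\<^sup>2 * t" .
    qed
    then show ?thesis by simp
  qed

  have LHS_D: "(norm (proj_perp A (\<Gamma> j \<union> \<Lambda>) (b j - xstar)))\<^sup>2 \<le> D\<^sup>2" if j: "j < M" for j
  proof -
    have u: "b j - x \<in> span (A ` (\<Gamma> j \<union> \<Lambda>))"
      using b_min j Lambda(3) span_mono[of "A ` \<Lambda>" "A ` (\<Gamma> j \<union> \<Lambda>)"] by (intro span_diff) auto
    have "norm (proj_perp A (\<Gamma> j \<union> \<Lambda>) (b j - xstar)) \<le> norm ((b j - xstar) - (b j - x))"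
      unfolding proj_perp_def by (rule proj_le[OF u])
    also have "\<dots> = D" unfolding D_def by (simp add: norm_minus_commute)
    finally show ?thesis by (intro power_mono) simp_all
  qed
  have EL_D: "EL \<le> D\<^sup>2"
  proof -
    have "(\<Sum>j<M. (norm (proj_perp A (\<Gamma> j \<union> \<Lambda>) (b j - xstar)))\<^sup>2) \<le> (\<Sum>j<M. D\<^sup>2)"
      using LHS_D by (intro sum_mono) auto
    then have "EL \<le> (1 / real M) * (\<Sum>j<M. D\<^sup>2)" unfolding EL_def using Mpos by (intro mult_left_mono) auto
    then show ?thesis using Mpos by simp
  qed

  have key: "EL \<le> (2 * ((rb + 1 / \<theta>\<^sup>2) - \<eta>\<^sub>1\<^sup>2 * \<rho>) / (\<eta>\<^sub>1\<^sup>2 * \<rho>) + 2 * sqrt (\<eta>\<^sub>1\<^sup>2 - 1) / (\<eta>\<^sub>1 * \<rho>) * (3 * Er + 1)) * D\<^sup>2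
            + (8 / \<rho>\<^sup>2 * mx + 1 / \<rho> * ((2 * \<theta>\<^sup>2 + 6 * c) * sg\<^sup>2 + 6 * c * gn\<^sup>2))"
  proof (cases "D = 0")
    case True
    have "0 \<le> 8 / \<rho>\<^sup>2 * mx" using mx0 rho by simp
    moreover have "0 \<le> 1 / \<rho> * ((2 * \<theta>\<^sup>2 + 6 * c) * sg\<^sup>2 + 6 * c * gn\<^sup>2)"
      using rho c0 by (intro mult_nonneg_nonneg add_nonneg_nonneg) auto
    ultimately show ?thesis using EL_D True by simp
  next
    case False
    then have Dpos: "D > 0" unfolding D_def by simp
    have Dl0: "Dl \<noteq> 0" using Dpos DDl by auto
    have sDl: "sparse_wrt A d (4 * \<tau>) Dl" using sparse_of_span[OF Rd _ Dl_span, of "4 * \<tau>"] cardR by simp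
    have sDl': "sparse_wrt A d (4 * \<tau>) (x - xstar)"
      using sparse_of_span[OF Rd _ span_neg[OF Dl_span], of "4 * \<tau>"] cardR unfolding Dl_def by simp
    have mono1: "f xstar - f x - F x \<bullet> Dl \<ge> \<rho> / 2 * D\<^sup>2" using RSC4[of xstar x] sDl DDl unfolding Dl_def by simp
    have mono2: "f x - f xstar - gs \<bullet> (x - xstar) \<ge> \<rho> / 2 * D\<^sup>2" using RSC4[of x xstar] sDl' unfolding D_def gs_def F_def by simp
    have monot: "(gs - F x) \<bullet> Dl \<ge> \<rho> * D\<^sup>2"
    proof -
      have "gs \<bullet> (x - xstar) = - (gs \<bullet> Dl)" unfolding Dl_def by (simp add: inner_diff_right)
      then show ?thesis using mono1 mono2 by (simp add: inner_diff_left)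
    qed
    have Fxg: "norm (F x - gs) \<le> rb * D" using Lip4[OF sDl'] unfolding gs_def F_def D_def by simp
    have rbrho: "rb \<ge> \<rho>"
    proof -
      have "\<rho> * D\<^sup>2 \<le> (gs - F x) \<bullet> Dl" by (rule monot)
      also have "\<dots> \<le> norm (gs - F x) * norm Dl" by (rule norm_cauchy_schwarz)
      also have "\<dots> \<le> (rb * D) * D" using Fxg DDl Dpos by (simp add: norm_minus_commute)
      finally have "\<rho> * D * D \<le> rb * D * D" by (simp add: power2_eq_square)
      then show ?thesis using Dpos by simp
    qed
    have Er_ge: "Er \<ge> \<rho>\<^sup>2"
    proof -
      have "\<exists>l\<in>R. A l \<noteq> 0"
      proof (rule ccontr)
        assume "\<not> ?thesis"
        then have "A ` R \<subseteq> {0}" by auto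
        then have "span (A ` R) \<subseteq> span {0}" by (rule span_mono)
        then show False using Dl_span Dl0 by auto
      qed
      then obtain l where l: "l \<in> R" "A l \<noteq> 0" by blast
      have "card R \<ge> 1" using l finR by (metis One_nat_def Suc_leI card_gt_0_iff empty_iff)
      then have tau1: "\<tau> \<ge> 1" using cardR by simp
      have lsp: "A l \<in> span (A ` {l})" by (intro span_base) simp
      have ld: "{l} \<subseteq> {..<d}" using l Rd by auto
      have s1: "sparse_wrt A d \<tau> ((x + A l) - x)" using sparse_of_span[OF ld _ lsp, of \<tau>] tau1 by simp
      have s4: "sparse_wrt A d (4 * \<tau>) ((x + A l) - x)" using sparse_of_span[OF ld _ lsp, of "4 * \<tau>"] tau1 by simp
      have s4': "sparse_wrt A d (4 * \<tau>) (x - (x + A l))"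
        using sparse_of_span[OF ld _ span_neg[OF lsp], of "4 * \<tau>"] tau1 by simp
      have r1: "f (x + A l) - f x - F x \<bullet> A l \<ge> \<rho> / 2 * (norm (A l))\<^sup>2" using RSC4[OF s4] by simp
      have r2: "f x - f (x + A l) + F (x + A l) \<bullet> A l \<ge> \<rho> / 2 * (norm (A l))\<^sup>2" using RSC4[OF s4'] by simp
      have "\<rho> * (norm (A l))\<^sup>2 \<le> (F (x + A l) - F x) \<bullet> A l" using r1 r2 by (simp add: inner_diff_left)
      also have "\<dots> \<le> norm (F (x + A l) - F x) * norm (A l)" by (rule norm_cauchy_schwarz)
      also have "\<dots> \<le> (rt * norm (A l)) * norm (A l)" using Lip1[OF s1] by (intro mult_right_mono) auto
      finally have "\<rho> * norm (A l) * norm (A l) \<le> rt * norm (A l) * norm (A l)" by (simp add: power2_eq_square)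
      then have rtr: "\<rho> \<le> rt" using l by simp
      have "(\<Sum>j<M. rho_p \<tau> i j)\<^sup>2 \<le> (\<Sum>j<M. (rho_p \<tau> i j)\<^sup>2) * real M"
        using sum_squared_le_sum_of_squares[of "rho_p \<tau> i" "{..<M}"] by simp
      then have "rt\<^sup>2 \<le> Er" unfolding rt_def Er_def using Mpos by (simp add: power_mult_distrib field_simps power2_eq_square)
      moreover have "\<rho>\<^sup>2 \<le> rt\<^sup>2" using rtr rho by (intro power_mono) auto
      ultimately show ?thesis by simp
    qed
    define c0 where "c0 = rb + 1 / \<theta>\<^sup>2"
    have c0pos: "c0 > 0" unfolding c0_def using rbrho rho theta by (simp add: add_pos_nonneg)
    define r where "r j = G i j x" for j
    define nn where "nn j = r j - F x" for j
    define q where "q j = proj A (\<Gamma> j) (r j)" for j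
    define pp where "pp j = (- (1 / c0)) *\<^sub>R q j" for j
    define V where "V j = Dl - pp j" for j
    define X0 where "X0 = (rb + 1 / \<theta>\<^sup>2) * D\<^sup>2 / (2 * \<eta>\<^sub>1\<^sup>2) - \<rho> * D\<^sup>2 / 2"
    have csq: "c\<^sup>2 = (\<eta>\<^sub>1\<^sup>2 - 1) / \<eta>\<^sub>1\<^sup>2"
    proof -
      have e21: "\<eta>\<^sub>1\<^sup>2 \<ge> 1" using eta1 by (simp add: one_le_power)
      have "(sqrt (\<eta>\<^sub>1\<^sup>2 - 1))\<^sup>2 = \<eta>\<^sub>1\<^sup>2 - 1" using e21 by simp
      then show ?thesis unfolding c_def by (simp add: power_divide)
    qed

    have perj: "(\<rho> / 2 - \<epsilon>) * (norm (V j))\<^sup>2 \<le> X0 + c * D * norm (r j) + \<theta>\<^sup>2 / 2 * (norm (nn j))\<^sup>2 + nn j \<bullet> Dl + mx / (4 * \<epsilon>)"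
      and perjL: "(norm (proj_perp A (\<Gamma> j \<union> \<Lambda>) (b j - xstar)))\<^sup>2 \<le> (norm (V j))\<^sup>2"
      if j: "j < M" and eps: "\<epsilon> > 0" for j \<epsilon>
    proof -
      obtain h where Gd: "\<Gamma> j \<subseteq> {..<d}" and Gc: "card (\<Gamma> j) \<le> 2 * \<tau>"
        and hb: "best_sparse_approx A d (2 * \<tau>) (r j) h"
        and hq: "norm (q j - r j) \<le> \<eta>\<^sub>1 * norm (r j - h)"
        using Gamma j unfolding is_approx_def q_def r_def by blast
      define GR where "GR = \<Gamma> j \<union> R"
      have GRd: "GR \<subseteq> {..<d}" unfolding GR_def using Gd Rd by auto
      have GRc: "card GR \<le> 4 * \<tau>" unfolding GR_def using card_Un_le[of "\<Gamma> j" R] Gc cardR by simp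
      have q_sp: "q j \<in> span (A ` \<Gamma> j)" unfolding q_def by (rule proj_in)
      have p_sp: "pp j \<in> span (A ` \<Gamma> j)" unfolding pp_def using q_sp by (rule span_scale)
      have sub1: "span (A ` \<Gamma> j) \<subseteq> span (A ` GR)" unfolding GR_def by (intro span_mono) auto
      have sub2: "span (A ` R) \<subseteq> span (A ` GR)" unfolding GR_def by (intro span_mono) auto
      have V_sp: "V j \<in> span (A ` GR)" unfolding V_def using sub1 sub2 p_sp Dl_span by (intro span_diff) auto
      have y_sp: "sparse_wrt A d (4 * \<tau>) ((x + pp j) - xstar)"
      proof -
        have "(x + pp j) - xstar = - V j" unfolding V_def Dl_def by simp
        then show ?thesis using sparse_of_span[OF GRd GRc span_neg[OF V_sp]] by simp
      qed
      have e1: "f (x + pp j) - f xstar - gs \<bullet> ((x + pp j) - xstar) \<ge> \<rho> / 2 * (norm (V j))\<^sup>2"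
      proof -
        have "norm ((x + pp j) - xstar) = norm (V j)" unfolding V_def Dl_def by (simp add: norm_minus_commute algebra_simps)
        then show ?thesis using RSC4[OF y_sp] unfolding gs_def F_def by simp
      qed
      have e2: "f (x + pp j) \<le> f x + F x \<bullet> pp j + rb / 2 * (norm (pp j))\<^sup>2"
      proof (rule fup)
        fix t :: real
        have "t *\<^sub>R pp j \<in> span (A ` GR)" using p_sp sub1 by (intro span_scale) auto
        then show "sparse_wrt A d (4 * \<tau>) (t *\<^sub>R pp j)" using sparse_of_span[OF GRd GRc] by simp
      qed
      have gsV: "gs \<bullet> ((x + pp j) - xstar) = - (gs \<bullet> V j)" unfolding V_def Dl_def by (simp add: inner_diff_right inner_add_right)
      have e3: "\<rho> / 2 * (norm (V j))\<^sup>2 \<le> F x \<bullet> (pp j - Dl) + rb / 2 * (norm (pp j))\<^sup>2 - \<rho> / 2 * D\<^sup>2 + gs \<bullet> V j"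
        using e1 e2 mono1 gsV by (simp add: inner_diff_right)
      have Fx: "F x = r j - nn j" unfolding nn_def by simp
      have rq: "r j \<bullet> q j = (norm (q j))\<^sup>2"
      proof -
        have "(r j - q j) \<bullet> q j = 0" unfolding q_def by (rule proj_orth[OF proj_in])
        then show ?thesis by (simp add: inner_diff_left power2_norm_eq_inner)
      qed
      have rp: "r j \<bullet> pp j = - (1 / c0) * (norm (q j))\<^sup>2" unfolding pp_def using rq by simp
      have pn: "(norm (pp j))\<^sup>2 = (1 / c0)\<^sup>2 * (norm (q j))\<^sup>2" unfolding pp_def using c0pos
        by (simp add: power_divide)
      have np: "nn j \<bullet> pp j = - (1 / c0) * (nn j \<bullet> q j)" unfolding pp_def by simp
      define PR where "PR = proj A R (r j)"
      have rD: "r j \<bullet> Dl = PR \<bullet> Dl"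
      proof -
        have "(r j - PR) \<bullet> Dl = 0" unfolding PR_def by (rule proj_orth[OF Dl_span])
        then show ?thesis by (simp add: inner_diff_left)
      qed
      have rD2: "- (r j \<bullet> Dl) \<le> norm PR * D"
      proof -
        have "- (PR \<bullet> Dl) \<le> norm PR * norm Dl"
          using norm_cauchy_schwarz[of "- PR" Dl] by simp
        then show ?thesis using rD DDl by simp
      qed
      have PRsp: "sparse_wrt A d (2 * \<tau>) PR" unfolding PR_def using sparse_of_span[OF Rd cardR proj_in] .
      have hbest: "norm (r j - h) \<le> norm (r j - PR)" using hb PRsp unfolding best_sparse_approx_def by blast
      have sel1: "norm (r j - q j) \<le> \<eta>\<^sub>1 * norm (r j - PR)"
        using hq hbest eta1 by (metis norm_minus_commute mult_left_mono order_trans le_numeral_extra(1) order.trans zero_le_one less_imp_le etapos)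
      have sel2: "(norm (r j - q j))\<^sup>2 \<le> \<eta>\<^sub>1\<^sup>2 * (norm (r j - PR))\<^sup>2"
        using power_mono[OF sel1, of 2] by (simp add: power_mult_distrib)
      have py1: "(norm (r j))\<^sup>2 = (norm (q j))\<^sup>2 + (norm (r j - q j))\<^sup>2" unfolding q_def by (rule proj_pyth)
      have py2: "(norm (r j))\<^sup>2 = (norm PR)\<^sup>2 + (norm (r j - PR))\<^sup>2" unfolding PR_def by (rule proj_pyth)
      have sel3: "\<eta>\<^sub>1\<^sup>2 * (norm PR)\<^sup>2 \<le> (norm (q j))\<^sup>2 + (\<eta>\<^sub>1\<^sup>2 - 1) * (norm (r j))\<^sup>2"
      proof -
        have s1: "\<eta>\<^sub>1\<^sup>2 * (norm PR)\<^sup>2 = \<eta>\<^sub>1\<^sup>2 * (norm (r j))\<^sup>2 - \<eta>\<^sub>1\<^sup>2 * (norm (r j - PR))\<^sup>2"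
          by (subst py2) (simp add: algebra_simps)
        have "\<eta>\<^sub>1\<^sup>2 * (norm PR)\<^sup>2 \<le> (norm (q j))\<^sup>2 + \<eta>\<^sub>1\<^sup>2 * (norm (r j))\<^sup>2 - (norm (r j))\<^sup>2"
          using s1 sel2 py1 by linarith
        then show ?thesis by (simp add: algebra_simps)
      qed
      have sel4: "(norm PR)\<^sup>2 \<le> (norm (q j) / \<eta>\<^sub>1)\<^sup>2 + (c * norm (r j))\<^sup>2"
      proof -
        have "(norm PR)\<^sup>2 = (\<eta>\<^sub>1\<^sup>2 * (norm PR)\<^sup>2) / \<eta>\<^sub>1\<^sup>2" using etapos by simp
        also have "\<dots> \<le> ((norm (q j))\<^sup>2 + (\<eta>\<^sub>1\<^sup>2 - 1) * (norm (r j))\<^sup>2) / \<eta>\<^sub>1\<^sup>2"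
          using sel3 by (intro divide_right_mono) simp_all
        also have "\<dots> = (norm (q j) / \<eta>\<^sub>1)\<^sup>2 + (c * norm (r j))\<^sup>2"
          using csq etapos by (simp add: power_divide power_mult_distrib add_divide_distrib)
        finally show ?thesis .
      qed
      have sel5: "norm PR \<le> norm (q j) / \<eta>\<^sub>1 + c * norm (r j)"
      proof -
        have "(norm PR)\<^sup>2 \<le> (norm (q j) / \<eta>\<^sub>1 + c * norm (r j))\<^sup>2"
        proof -
          have nn0: "0 \<le> 2 * (norm (q j) / \<eta>\<^sub>1) * (c * norm (r j))" using c0 etapos by simp
          have ps: "(norm (q j) / \<eta>\<^sub>1 + c * norm (r j))\<^sup>2 = (norm (q j) / \<eta>\<^sub>1)\<^sup>2 + (c * norm (r j))\<^sup>2 + 2 * (norm (q j) / \<eta>\<^sub>1) * (c * norm (r j))"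
            by (rule power2_sum)
          show ?thesis using sel4 ps nn0 by linarith
        qed
        then show ?thesis by (rule power2_le_imp_le) (use c0 etapos in simp)
      qed
      have y1: "2 * norm (q j) * (D / \<eta>\<^sub>1) \<le> (norm (q j))\<^sup>2 / c0 + c0 * (D / \<eta>\<^sub>1)\<^sup>2" by (rule young[OF c0pos])
      have y2: "2 * norm (q j) * norm (nn j) \<le> (norm (q j))\<^sup>2 / (\<theta>\<^sup>2 * c0) + (\<theta>\<^sup>2 * c0) * (norm (nn j))\<^sup>2"
        using c0pos theta by (intro young) simp
      have nq: "nn j \<bullet> q j \<le> norm (q j) * norm (nn j)"
        using norm_cauchy_schwarz[of "nn j" "q j"] by (simp add: mult.commute)
      obtain \<Omega>' where \<Omega>': "GR \<subseteq> \<Omega>'" "\<Omega>' \<subseteq> {..<d}" "card \<Omega>' = 4 * \<tau>" using pad_set[OF GRd GRc d_ge] by blast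
      define PG where "PG = proj A \<Omega>' gs"
      have V_sp': "V j \<in> span (A ` \<Omega>')" using V_sp span_mono[of "A ` GR" "A ` \<Omega>'"] \<Omega>'(1) by auto
      have gsPG: "gs \<bullet> V j = PG \<bullet> V j"
      proof -
        have "(gs - PG) \<bullet> V j = 0" unfolding PG_def by (rule proj_orth[OF V_sp'])
        then show ?thesis by (simp add: inner_diff_left)
      qed
      have PGmx: "(norm PG)\<^sup>2 \<le> mx" unfolding PG_def using mx_ge \<Omega>'(2,3) by simp
      have gsb: "gs \<bullet> V j \<le> \<epsilon> * (norm (V j))\<^sup>2 + mx / (4 * \<epsilon>)"
      proof -
        have a1: "gs \<bullet> V j \<le> norm PG * norm (V j)" using gsPG norm_cauchy_schwarz[of PG "V j"] by simp
        have e2p: "2 * \<epsilon> > 0" using eps by simp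
        have a2: "2 * norm PG * norm (V j) \<le> (norm PG)\<^sup>2 / (2 * \<epsilon>) + (2 * \<epsilon>) * (norm (V j))\<^sup>2"
          by (rule young[OF e2p])
        have a3: "(norm PG)\<^sup>2 / (2 * \<epsilon>) = 2 * ((norm PG)\<^sup>2 / (4 * \<epsilon>))" by simp
        have a4: "(norm PG)\<^sup>2 / (4 * \<epsilon>) \<le> mx / (4 * \<epsilon>)" using PGmx eps by (intro divide_right_mono) simp_all
        have a5: "(2 * \<epsilon>) * (norm (V j))\<^sup>2 = 2 * (\<epsilon> * (norm (V j))\<^sup>2)" by simp
        show ?thesis using a1 a2 a3 a4 a5 by linarith
      qed
      have Qcoef: "- (1 / c0) * Q + Q / (2 * c0) + Q / (2 * \<theta>\<^sup>2 * c0\<^sup>2) + rb / 2 * ((1 / c0)\<^sup>2 * Q) = 0" for Q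
        using qcoef[OF c0pos _ c0_def[symmetric], of Q] theta by simp
      have main: "\<rho> / 2 * (norm (V j))\<^sup>2 \<le> - (1 / c0) * (norm (q j))\<^sup>2 + (norm PR * D)
            + (1 / c0) * (nn j \<bullet> q j) + nn j \<bullet> Dl + rb / 2 * ((1 / c0)\<^sup>2 * (norm (q j))\<^sup>2) - \<rho> / 2 * D\<^sup>2 + gs \<bullet> V j"
      proof -
        have "F x \<bullet> (pp j - Dl) = r j \<bullet> pp j - r j \<bullet> Dl - nn j \<bullet> pp j + nn j \<bullet> Dl"
          unfolding Fx by (simp add: inner_diff_left inner_diff_right)
        moreover have "rb / 2 * (norm (pp j))\<^sup>2 = rb / 2 * ((1 / c0)\<^sup>2 * (norm (q j))\<^sup>2)" by (simp only: pn)
        ultimately show ?thesis using e3 rp np rD2 by linarith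
      qed
      have t1: "norm PR * D \<le> (norm (q j))\<^sup>2 / (2 * c0) + c0 * D\<^sup>2 / (2 * \<eta>\<^sub>1\<^sup>2) + c * D * norm (r j)"
      proof -
        have "norm PR * D \<le> (norm (q j) / \<eta>\<^sub>1 + c * norm (r j)) * D" using sel5 Dpos by (intro mult_right_mono) simp_all
        moreover have "norm (q j) / \<eta>\<^sub>1 * D = norm (q j) * (D / \<eta>\<^sub>1)" by simp
        moreover have "norm (q j) * (D / \<eta>\<^sub>1) \<le> (norm (q j))\<^sup>2 / (2 * c0) + c0 * D\<^sup>2 / (2 * \<eta>\<^sub>1\<^sup>2)"
          using y1 by (simp add: power_divide)
        ultimately show ?thesis by (simp add: algebra_simps)
      qed
      have t2: "(1 / c0) * (nn j \<bullet> q j) \<le> (norm (q j))\<^sup>2 / (2 * \<theta>\<^sup>2 * c0\<^sup>2) + \<theta>\<^sup>2 / 2 * (norm (nn j))\<^sup>2"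
      proof -
        have "(1 / c0) * (nn j \<bullet> q j) \<le> (1 / c0) * (norm (q j) * norm (nn j))"
          using nq c0pos by (intro mult_left_mono) simp_all
        also have "\<dots> \<le> (1 / c0) * (((norm (q j))\<^sup>2 / (\<theta>\<^sup>2 * c0) + (\<theta>\<^sup>2 * c0) * (norm (nn j))\<^sup>2) / 2)"
          using y2 c0pos by (intro mult_left_mono) simp_all
        also have "\<dots> = (norm (q j))\<^sup>2 / (2 * \<theta>\<^sup>2 * c0\<^sup>2) + \<theta>\<^sup>2 / 2 * (norm (nn j))\<^sup>2"
          using c0pos theta by (simp add: field_simps power2_eq_square)
        finally show ?thesis .
      qed
      have X0eq: "X0 = c0 * D\<^sup>2 / (2 * \<eta>\<^sub>1\<^sup>2) - \<rho> / 2 * D\<^sup>2" unfolding X0_def c0_def by simp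
      have "\<rho> / 2 * (norm (V j))\<^sup>2 \<le> X0 + c * D * norm (r j) + \<theta>\<^sup>2 / 2 * (norm (nn j))\<^sup>2 + nn j \<bullet> Dl + gs \<bullet> V j"
        using main t1 t2 Qcoef[of "(norm (q j))\<^sup>2"] X0eq by linarith
      then show "(\<rho> / 2 - \<epsilon>) * (norm (V j))\<^sup>2 \<le> X0 + c * D * norm (r j) + \<theta>\<^sup>2 / 2 * (norm (nn j))\<^sup>2 + nn j \<bullet> Dl + mx / (4 * \<epsilon>)"
      proof -
        have "(\<rho> / 2 - \<epsilon>) * (norm (V j))\<^sup>2 = \<rho> / 2 * (norm (V j))\<^sup>2 - \<epsilon> * (norm (V j))\<^sup>2"
          by (rule left_diff_distrib)
        then show ?thesis using gsb \<open>\<rho> / 2 * (norm (V j))\<^sup>2 \<le> X0 + c * D * norm (r j) + \<theta>\<^sup>2 / 2 * (norm (nn j))\<^sup>2 + nn j \<bullet> Dl + gs \<bullet> V j\<close>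
          by linarith
      qed
      have u: "b j - x - pp j \<in> span (A ` (\<Gamma> j \<union> \<Lambda>))"
      proof -
        have "b j \<in> span (A ` (\<Gamma> j \<union> \<Lambda>))" using b_min j by auto
        moreover have "x \<in> span (A ` (\<Gamma> j \<union> \<Lambda>))" using Lambda(3) span_mono[of "A ` \<Lambda>" "A ` (\<Gamma> j \<union> \<Lambda>)"] by auto
        moreover have "pp j \<in> span (A ` (\<Gamma> j \<union> \<Lambda>))" using p_sp span_mono[of "A ` \<Gamma> j" "A ` (\<Gamma> j \<union> \<Lambda>)"] by auto
        ultimately show ?thesis by (intro span_diff) auto
      qed
      have "norm (proj_perp A (\<Gamma> j \<union> \<Lambda>) (b j - xstar)) \<le> norm ((b j - xstar) - (b j - x - pp j))"
        unfolding proj_perp_def by (rule proj_le[OF u])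
      also have "\<dots> = norm (V j)" unfolding V_def Dl_def by (simp add: norm_minus_commute algebra_simps)
      finally show "(norm (proj_perp A (\<Gamma> j \<union> \<Lambda>) (b j - xstar)))\<^sup>2 \<le> (norm (V j))\<^sup>2" by (intro power_mono) simp_all
    qed
    define Ev where "Ev = (1 / real M) * (\<Sum>j<M. (norm (V j))\<^sup>2)"
    have sumn: "(\<Sum>j<M. nn j) = 0"
    proof -
      have "(\<Sum>j<M. nn j) = (\<Sum>j<M. G i j x) - real M *\<^sub>R F x"
        unfolding nn_def r_def by (simp add: sum_subtractf sum_constant_scaleR)
      also have "real M *\<^sub>R F x = (\<Sum>j<M. G i j x)" unfolding F_def loc_grad_def using Mpos by simp
      finally show ?thesis by simp
    qed
    have var: "(\<Sum>j<M. (norm (nn j))\<^sup>2) \<le> real M * sg\<^sup>2"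
    proof -
      have "(1 / real M) * (\<Sum>j<M. (norm (G i j x - loc_grad M G i x))\<^sup>2) \<le> (\<sigma> i)\<^sup>2"
        using variance client x_sp by auto
      then have "(\<Sum>j<M. (norm (G i j x - loc_grad M G i x))\<^sup>2) \<le> real M * (\<sigma> i)\<^sup>2"
        using Mpos by (simp add: field_simps)
      then show ?thesis unfolding nn_def r_def F_def sg2 .
    qed
    have sumnn: "(\<Sum>j<M. norm (nn j)) \<le> real M * sg"
    proof -
      have "(\<Sum>j<M. norm (nn j))\<^sup>2 \<le> (\<Sum>j<M. (norm (nn j))\<^sup>2) * real M"
        using sum_squared_le_sum_of_squares[of "\<lambda>j. norm (nn j)" "{..<M}"] by simp
      also have "\<dots> \<le> (real M * sg\<^sup>2) * real M" using var Mpos by (intro mult_right_mono) simp_all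
      also have "\<dots> = (real M * sg)\<^sup>2" by (simp add: power2_eq_square)
      finally show ?thesis by (rule power2_le_imp_le) (use Mpos in \<open>simp add: sg_def\<close>)
    qed
    have Fxn: "norm (F x) \<le> gn + rb * D"
    proof -
      have "norm (F x) \<le> norm gs + norm (F x - gs)" by (rule norm_triangle_sub)
      then show ?thesis using Fxg unfolding gn_def by simp
    qed
    have sumr: "(\<Sum>j<M. norm (r j)) \<le> real M * (gn + sg + rb * D)"
    proof -
      have "(\<Sum>j<M. norm (r j)) \<le> (\<Sum>j<M. norm (F x) + norm (nn j))"
        unfolding nn_def by (intro sum_mono norm_triangle_sub)
      also have "\<dots> = real M * norm (F x) + (\<Sum>j<M. norm (nn j))" by (simp add: sum.distrib)
      also have "\<dots> \<le> real M * (gn + rb * D) + real M * sg"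
        using sumnn Fxn Mpos by (intro add_mono mult_left_mono) simp_all
      finally show ?thesis by (simp add: algebra_simps)
    qed
    have avg: "(\<rho> / 2 - \<epsilon>) * Ev \<le> X0 + c * D * (gn + sg + rb * D) + \<theta>\<^sup>2 * sg\<^sup>2 / 2 + mx / (4 * \<epsilon>)"
      if eps: "\<epsilon> > 0" for \<epsilon>
    proof -
      have "(\<Sum>j<M. (\<rho> / 2 - \<epsilon>) * (norm (V j))\<^sup>2) \<le> (\<Sum>j<M. X0 + c * D * norm (r j) + \<theta>\<^sup>2 / 2 * (norm (nn j))\<^sup>2 + nn j \<bullet> Dl + mx / (4 * \<epsilon>))"
        using perj eps by (intro sum_mono) auto
      also have "\<dots> = real M * X0 + c * D * (\<Sum>j<M. norm (r j)) + \<theta>\<^sup>2 / 2 * (\<Sum>j<M. (norm (nn j))\<^sup>2) + (\<Sum>j<M. nn j) \<bullet> Dl + real M * (mx / (4 * \<epsilon>))"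
        by (simp add: sum.distrib sum_distrib_left inner_sum_left)
      also have "\<dots> = real M * X0 + c * D * (\<Sum>j<M. norm (r j)) + \<theta>\<^sup>2 / 2 * (\<Sum>j<M. (norm (nn j))\<^sup>2) + real M * (mx / (4 * \<epsilon>))"
        using sumn by simp
      also have "\<dots> \<le> real M * X0 + c * D * (real M * (gn + sg + rb * D)) + \<theta>\<^sup>2 / 2 * (real M * sg\<^sup>2) + real M * (mx / (4 * \<epsilon>))"
      proof -
        have "c * D * (\<Sum>j<M. norm (r j)) \<le> c * D * (real M * (gn + sg + rb * D))"
          using sumr c0 Dpos by (intro mult_left_mono) simp_all
        moreover have "\<theta>\<^sup>2 / 2 * (\<Sum>j<M. (norm (nn j))\<^sup>2) \<le> \<theta>\<^sup>2 / 2 * (real M * sg\<^sup>2)"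
          using var by (intro mult_left_mono) simp_all
        ultimately show ?thesis by simp
      qed
      also have "\<dots> = real M * (X0 + c * D * (gn + sg + rb * D) + \<theta>\<^sup>2 * sg\<^sup>2 / 2 + mx / (4 * \<epsilon>))"
        by (simp add: algebra_simps)
      finally have "(\<Sum>j<M. (\<rho> / 2 - \<epsilon>) * (norm (V j))\<^sup>2) \<le> real M * (X0 + c * D * (gn + sg + rb * D) + \<theta>\<^sup>2 * sg\<^sup>2 / 2 + mx / (4 * \<epsilon>))" .
      moreover have "(\<Sum>j<M. (\<rho> / 2 - \<epsilon>) * (norm (V j))\<^sup>2) = real M * ((\<rho> / 2 - \<epsilon>) * Ev)"
        unfolding Ev_def using Mpos by (simp add: sum_distrib_left)
      ultimately show ?thesis using Mpos by simp
    qed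
    have ELEv: "EL \<le> Ev"
    proof -
      have "(\<Sum>j<M. (norm (proj_perp A (\<Gamma> j \<union> \<Lambda>) (b j - xstar)))\<^sup>2) \<le> (\<Sum>j<M. (norm (V j))\<^sup>2)"
        using perjL[where \<epsilon>=1] by (intro sum_mono) auto
      then show ?thesis unfolding EL_def Ev_def using Mpos by (intro mult_left_mono) auto
    qed
    have h1: "\<rho> / 4 * Ev \<le> ((rb + 1 / \<theta>\<^sup>2) * D\<^sup>2 / (2 * \<eta>\<^sub>1\<^sup>2) - \<rho> * D\<^sup>2 / 2) + c * D * (gn + sg + rb * D) + \<theta>\<^sup>2 * sg\<^sup>2 / 2 + mx / \<rho>"
    proof -
      have "\<rho> / 2 - \<rho> / 4 = \<rho> / 4" by simp
      moreover have "mx / (4 * (\<rho> / 4)) = mx / \<rho>" by simp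
      ultimately show ?thesis using avg[of "\<rho> / 4"] rho unfolding X0_def by simp
    qed
    have h2: "2 * \<rho> / 5 * Ev \<le> ((rb + 1 / \<theta>\<^sup>2) * D\<^sup>2 / (2 * \<eta>\<^sub>1\<^sup>2) - \<rho> * D\<^sup>2 / 2) + c * D * (gn + sg + rb * D) + \<theta>\<^sup>2 * sg\<^sup>2 / 2 + 5 * mx / (2 * \<rho>)"
    proof -
      have "\<rho> / 2 - \<rho> / 10 = 2 * \<rho> / 5" by simp
      moreover have "mx / (4 * (\<rho> / 10)) = 5 * mx / (2 * \<rho>)" by simp
      ultimately show ?thesis using avg[of "\<rho> / 10"] rho unfolding X0_def by simp
    qed
    have Dge: "D \<ge> 0" using Dpos by simp
    have gn0: "gn \<ge> 0" unfolding gn_def by simp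
    have sg0: "sg \<ge> 0" unfolding sg_def by simp
    show ?thesis using final_arith[OF rho theta eta1 c_def Dge gn0 sg0 mx0 Er_ge rbrho EL_D ELEv h1 h2] .
  qed
  show ?thesis
    unfolding Let_def
    using key xi unfolding EL_def \<rho>_def rb_def Er_def gs_def mx_def c_def D_def sg_def gn_def
    by simp
qed

end
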